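(* There is an uncountable set of triples of decision points $(d_1,d_2,d_3)\in(0,1)^3$ for each of which the triangle process has a nonperiodic trajectory.
   Context: Triangle process. Fix $\lambda_1,\lambda_2,\lambda_3>0$, $\mu_1,\mu_2,\mu_3>0$ with $\rho_i:=\lambda_i/\mu_i<1$ for each $i$ and $\rho_1+\rho_2+\rho_3>1$. Put $\theta_j:=\mu_j^{-1}(\lambda_1+\lambda_2+\lambda_3)-1$. Let $e_1,e_2,e_3$ be the standard basis of $\mathbb R^3$, $A_i^0:=\{y\in\mathbb R^3: y_1+y_2+y_3=1,\ y_i=0,\ y_l\ge0\ \forall l\}$ and $A^0:=A_1^0\cup A_2^0\cup A_3^0$. For $j\in\{1,2,3\}$ and $z\in A^0\setminus A_j^0$ let $f_j(z):=\sum_{i\neq j}\frac{(\mu_j-\lambda_j)z_i+\lambda_i z_j}{(\mu_j-\lambda_j)+\mu_j\theta_j z_j}\,e_i\in A_j^0$. Let $(\hat i,\hat j,\hat k)$ denote $(1,2,3)$ or one of its cyclic permutations; the point $(1-x)e_{\hat j}+xe_{\hat k}\in A^0_{\hat i}$, $x\in[0,1]$, is written $(x,\hat i)$, with $\mathrm{Side}((x,\hat i)):=\hat i$. Decision points are numbers $d_1,d_2,d_3\in(0,1)$, identified with the points $(d_{\hat i},\hat i)$. The switching rule is $\mathfrak R((x,\hat i))=\hat j$ if $x<d_{\hat i}$, $=\hat k$ if $x>d_{\hat i}$, and both values are allowed if $x=d_{\hat i}$. The map is $\varphi(z):=f_{\mathfrak R(z)}(z)$. A trajectory is a sequence $(z(t))_{t\ge0}$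 with $z(t+1)\in\varphi(z(t))$. It is eventually $m$-periodic if there is $N$ with $\mathrm{Side}(z(n+m))=\mathrm{Side}(z(n))$ for all $n\ge N$, and nonperiodic if it is eventually $m$-periodic for no $m\ge1$. *)

theory Defs
  imports Complex_Main "HOL-Library.Countable_Set"
begin

text \<open>Sides/coordinates are indexed by 1,2,3. The cyclic successor of i.\<close>
definition nxt :: "nat \<Rightarrow> nat" where
  "nxt i = i mod 3 + 1"

text \<open>The point (x, i) = (1-x) e_j + x e_k of side A_i^0, with (i,j,k) cyclic.
  Points of R^3 are functions nat => real, coordinates 1,2,3 (others 0).\<close>
definition pt :: "real \<times> nat \<Rightarrow> (nat \<Rightarrow> real)" where
  "pt p = (\<lambda>l. if l = nxt (snd p) then 1 - fst p
              else if l = nxt (nxt (snd p)) then fst p else 0)"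

definition side :: "real \<times> nat \<Rightarrow> nat" where
  "side p = snd p"

definition theta :: "(nat \<Rightarrow> real) \<Rightarrow> (nat \<Rightarrow> real) \<Rightarrow> nat \<Rightarrow> real" where
  "theta lam mu j = (lam 1 + lam 2 + lam 3) / mu j - 1"

definition fmap :: "(nat \<Rightarrow> real) \<Rightarrow> (nat \<Rightarrow> real) \<Rightarrow> nat \<Rightarrow> (nat \<Rightarrow> real) \<Rightarrow> (nat \<Rightarrow> real)" where
  "fmap lam mu j z = (\<lambda>i. if i \<in> {1,2,3} \<and> i \<noteq> j then
      ((mu j - lam j) * z i + lam i * z j) / ((mu j - lam j) + mu j * theta lam mu j * z j)
     else 0)"

text \<open>Switching rule: rule d p j means j is an allowed value of R(p).\<close>
definition rule :: "(nat \<Rightarrow> real) \<Rightarrow> real \<times> nat \<Rightarrow> nat \<Rightarrow> bool" where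
  "rule d p j \<longleftrightarrow>
     (fst p < d (snd p) \<and> j = nxt (snd p)) \<or>
     (fst p > d (snd p) \<and> j = nxt (nxt (snd p))) \<or>
     (fst p = d (snd p) \<and> (j = nxt (snd p) \<or> j = nxt (nxt (snd p))))"

definition trajectory :: "(nat \<Rightarrow> real) \<Rightarrow> (nat \<Rightarrow> real) \<Rightarrow> (nat \<Rightarrow> real) \<Rightarrow> (nat \<Rightarrow> real \<times> nat) \<Rightarrow> bool" where
  "trajectory lam mu d z \<longleftrightarrow>
     (\<forall>t. snd (z t) \<in> {1,2,3} \<and> fst (z t) \<in> {0..1} \<and>
        (\<exists>j. rule d (z t) j \<and> side (z (Suc t)) = j \<and>
             pt (z (Suc t)) = fmap lam mu j (pt (z t))))"

definition eventually_periodic :: "(nat \<Rightarrow> real \<times> nat) \<Rightarrow> nat \<Rightarrow> bool" where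
  "eventually_periodic z m \<longleftrightarrow> (\<exists>N. \<forall>n\<ge>N. side (z (n + m)) = side (z n))"

definition nonperiodic :: "(nat \<Rightarrow> real \<times> nat) \<Rightarrow> bool" where
  "nonperiodic z \<longleftrightarrow> (\<forall>m\<ge>1. \<not> eventually_periodic z m)"

definition dfun :: "real \<times> real \<times> real \<Rightarrow> nat \<Rightarrow> real" where
  "dfun d i = (if i = 1 then fst d else if i = 2 then fst (snd d) else snd (snd d))"

end

theory Submission
  imports Defs "HOL-Analysis.Analysis"
begin


fun pos :: "(real\<Rightarrow>real) \<Rightarrow> (real\<Rightarrow>real) \<Rightarrow> bool list \<Rightarrow> real \<Rightarrow> nat \<Rightarrow> real" where
  "pos A B ws x 0 = x"
| "pos A B ws x (Suc t) = (if ws!t then B else A) (pos A B ws x t)"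

definition cnt :: "bool list \<Rightarrow> nat \<Rightarrow> nat" where
  "cnt ws t = (\<Sum>i<t. if ws!i then 1 else 0)"

lemma cnt_0[simp]: "cnt ws 0 = 0"
  by (simp add: cnt_def)

lemma cnt_Suc: "cnt ws (Suc t) = cnt ws t + (if ws!t then 1 else 0)"
  by (simp add: cnt_def)

lemma cnt_le: "cnt ws t \<le> t"
  by (induction t) (auto simp: cnt_Suc)

definition seg :: "(real\<Rightarrow>real) \<Rightarrow> (real\<Rightarrow>real) \<Rightarrow> real \<Rightarrow> bool list \<Rightarrow> real \<Rightarrow> bool" where
  "seg A B s ws x \<longleftrightarrow> B s \<le> x \<and> x \<le> A s \<and>
     (\<forall>t<length ws. (ws!t \<longrightarrow> s \<le> pos A B ws x t) \<and> (\<not> ws!t \<longrightarrow> pos A B ws x t \<le> s))"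

locale gm =
  fixes A B :: "real \<Rightarrow> real"
  assumes contA: "continuous_on UNIV A" and contB: "continuous_on UNIV B"
  and monoA: "\<And>x y. 0 \<le> x \<Longrightarrow> x < y \<Longrightarrow> y \<le> 1 \<Longrightarrow> A x < A y"
  and monoB: "\<And>x y. 0 \<le> x \<Longrightarrow> x < y \<Longrightarrow> y \<le> 1 \<Longrightarrow> B x < B y"
  and rangeA: "\<And>x. 0 \<le> x \<Longrightarrow> x \<le> 1 \<Longrightarrow> 0 \<le> A x \<and> A x \<le> 1"
  and rangeB: "\<And>x. 0 \<le> x \<Longrightarrow> x \<le> 1 \<Longrightarrow> 0 \<le> B x \<and> B x \<le> 1"
  and A1: "A 1 = 1" and A0: "A 0 > 0" and B0: "B 0 = 0"
  and disj: "\<And>y. 0 \<le> y \<Longrightarrow> y \<le> 1 \<Longrightarrow> A y > y \<or> B y < y"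
  and gap: "\<And>s. 0 \<le> s \<Longrightarrow> s \<le> 1 \<Longrightarrow> B (A s) \<le> A (B s)"
begin

lemma monoA': "0 \<le> x \<Longrightarrow> x \<le> y \<Longrightarrow> y \<le> 1 \<Longrightarrow> A x \<le> A y"
  using monoA[of x y] by (cases "x = y") auto
lemma monoB': "0 \<le> x \<Longrightarrow> x \<le> y \<Longrightarrow> y \<le> 1 \<Longrightarrow> B x \<le> B y"
  using monoB[of x y] by (cases "x = y") auto

definition "pA = Inf {y\<in>{0..1}. A y = y}"

lemma closed_fixA: "closed {y\<in>{0..1}. A y = y}"
proof -
  have "closed {y. A y = y}" by (rule closed_Collect_eq[OF contA continuous_on_id])
  then have "closed ({0..1} \<inter> {y. A y = y})" by (intro closed_Int) auto
  moreover have "{y\<in>{0..1}. A y = y} = {0..1} \<inter> {y. A y = y}" by auto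
  ultimately show ?thesis by simp
qed

lemma pA_mem: "pA \<in> {y\<in>{0..1}. A y = y}"
  unfolding pA_def
  by (rule closed_contains_Inf[OF _ _ closed_fixA]) (use A1 in \<open>auto intro: bdd_belowI[of _ 0]\<close>)

lemma pA_props: "0 \<le> pA" "pA \<le> 1" "A pA = pA"
  using pA_mem by auto

lemma pA_pos: "0 < pA"
  using pA_props A0 by (cases "pA = 0") auto

lemma A_gt: assumes "0 \<le> y" "y < pA" shows "A y > y"
proof (rule ccontr)
  assume "\<not> A y > y"
  then have "(\<lambda>t. A t - t) y \<le> 0" by simp
  moreover have "0 \<le> (\<lambda>t. A t - t) 0" using A0 by simp
  moreover have "continuous_on {0..y} (\<lambda>t. A t - t)"
    by (intro continuous_intros continuous_on_subset[OF contA]) auto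
  ultimately obtain t where t: "0 \<le> t" "t \<le> y" "A t - t = 0"
    using IVT2'[of "\<lambda>t. A t - t" y 0 0] assms by auto
  then have "t \<in> {y\<in>{0..1}. A y = y}" using assms pA_props by auto
  then have "pA \<le> t" unfolding pA_def by (intro cInf_lower) (auto intro: bdd_belowI[of _ 0])
  then show False using t assms by auto
qed

lemma A_ge: "0 \<le> y \<Longrightarrow> y \<le> pA \<Longrightarrow> A y \<ge> y"
  using A_gt[of y] pA_props by (cases "y = pA") auto

lemma B_pA: "B pA < pA"
  using disj[of pA] pA_props by auto

definition "pB = Sup {y\<in>{0..pA}. B y = y}"

lemma closed_fixB: "closed {y\<in>{0..pA}. B y = y}"
proof -
  have "closed {y. B y = y}" by (rule closed_Collect_eq[OF contB continuous_on_id])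
  then have "closed ({0..pA} \<inter> {y. B y = y})" by (intro closed_Int) auto
  moreover have "{y\<in>{0..pA}. B y = y} = {0..pA} \<inter> {y. B y = y}" by auto
  ultimately show ?thesis by simp
qed

lemma pB_mem: "pB \<in> {y\<in>{0..pA}. B y = y}"
  unfolding pB_def
  by (rule closed_contains_Sup[OF _ _ closed_fixB]) (use B0 pA_props in \<open>auto intro: bdd_aboveI[of _ pA]\<close>)

lemma pB_props: "0 \<le> pB" "pB \<le> pA" "B pB = pB"
  using pB_mem by auto

lemma pB_lt: "pB < pA"
  using pB_props B_pA by (cases "pB = pA") auto

lemma B_lt: assumes "pB < y" "y \<le> pA" shows "B y < y"
proof (rule ccontr)
  assume "\<not> B y < y"
  then have "0 \<le> (\<lambda>t. B t - t) y" by simp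
  moreover have "(\<lambda>t. B t - t) pA \<le> 0" using B_pA by simp
  moreover have "continuous_on {y..pA} (\<lambda>t. B t - t)"
    by (intro continuous_intros continuous_on_subset[OF contB]) auto
  ultimately obtain t where t: "y \<le> t" "t \<le> pA" "B t - t = 0"
    using IVT2'[of "\<lambda>t. B t - t" pA 0 y] assms by auto
  then have "t \<in> {y\<in>{0..pA}. B y = y}" using assms pB_props by auto
  then have "t \<le> pB" unfolding pB_def by (intro cSup_upper) (auto intro: bdd_aboveI[of _ pA])
  then show False using t assms by auto
qed

lemma B_le: "pB \<le> y \<Longrightarrow> y \<le> pA \<Longrightarrow> B y \<le> y"
  using B_lt[of y] pB_props by (cases "y = pB") auto


lemma I01: assumes "pB \<le> s" "s \<le> pA" shows "0 \<le> B s" "A s \<le> 1"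
proof -
  have s01: "0 \<le> s" "s \<le> 1" using assms pB_props(1) pA_props(2) by linarith+
  show "0 \<le> B s" using rangeB[OF s01] by blast
  show "A s \<le> 1" using rangeA[OF s01] by blast
qed

lemma A_le_pA: "0 \<le> s \<Longrightarrow> s \<le> pA \<Longrightarrow> A s \<le> pA"
  using monoA'[of s pA] pA_props by simp

lemma inv_A: assumes "pB \<le> s" "s \<le> pA" "B s \<le> x" "x \<le> s" shows "B s \<le> A x \<and> A x \<le> A s"
proof -
  have s01: "0 \<le> s" "s \<le> 1" using assms pB_props(1) pA_props(2) by linarith+
  have Bs0: "0 \<le> B s" using I01(1)[OF assms(1,2)] .
  have Bs1: "B s \<le> s" using B_le[OF assms(1,2)] .
  have x01: "0 \<le> x" "x \<le> 1" using Bs0 assms s01 by linarith+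
  have 1: "A x \<ge> A (B s)" using monoA'[OF Bs0 assms(3) x01(2)] .
  have Bs2: "B s \<le> pA" using Bs1 assms(2) by linarith
  have 2: "A (B s) \<ge> B s" using A_ge[OF Bs0 Bs2] .
  have 3: "A x \<le> A s" using monoA'[OF x01(1) assms(4) s01(2)] .
  show ?thesis using 1 2 3 by linarith
qed

lemma inv_B: assumes "pB \<le> s" "s \<le> pA" "s \<le> x" "x \<le> A s" shows "B s \<le> B x \<and> B x \<le> A s"
proof -
  have s01: "0 \<le> s" "s \<le> 1" using assms pB_props(1) pA_props(2) by linarith+
  have As1: "s \<le> A s" using A_ge[OF s01(1) assms(2)] .
  have As2: "A s \<le> pA" using A_le_pA[OF s01(1) assms(2)] .
  have x01: "0 \<le> x" "x \<le> 1" using As2 assms s01 pA_props(2) by linarith+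
  have 1: "B s \<le> B x" using monoB'[OF s01(1) assms(3) x01(2)] .
  have As3: "A s \<le> 1" using As2 pA_props(2) by linarith
  have 2: "B x \<le> B (A s)" using monoB'[OF x01(1) assms(4) As3] .
  have As4: "pB \<le> A s" using As1 assms(1) by linarith
  have 3: "B (A s) \<le> A s" using B_le[OF As4 As2] .
  show ?thesis using 1 2 3 by linarith
qed

lemma pos_inv: assumes "pB \<le> s" "s \<le> pA" "seg A B s ws x" "t \<le> length ws"
  shows "B s \<le> pos A B ws x t \<and> pos A B ws x t \<le> A s"
  using assms(4)
proof (induction t)
  case 0 thus ?case using assms(3) by (simp add: seg_def)
next
  case (Suc t)
  then have IH: "B s \<le> pos A B ws x t \<and> pos A B ws x t \<le> A s" and tl: "t < length ws" by auto
  from assms(3) tl have c: "(ws!t \<longrightarrow> s \<le> pos A B ws x t) \<and> (\<not> ws!t \<longrightarrow> pos A B ws x t \<le> s)"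
    by (simp add: seg_def)
  show ?case
  proof (cases "ws!t")
    case True
    then have "s \<le> pos A B ws x t" using c by blast
    then have "B s \<le> B (pos A B ws x t) \<and> B (pos A B ws x t) \<le> A s" using inv_B[OF assms(1,2)] IH by blast
    then show ?thesis using True by simp
  next
    case False
    then have "pos A B ws x t \<le> s" using c by blast
    then have "B s \<le> A (pos A B ws x t) \<and> A (pos A B ws x t) \<le> A s" using inv_A[OF assms(1,2)] IH by blast
    then show ?thesis using False by simp
  qed
qed

lemma cnt_at_pA: assumes "seg A B pA ws x"
  shows "cnt ws (length ws) \<le> 1"
proof -
  have pBA: "pB \<le> pA" using pB_lt by linarith
  have x0: "B pA \<le> x" "x \<le> A pA" using assms unfolding seg_def by blast+
  have b0: "0 \<le> B pA" using I01(1)[OF pBA order_refl] .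
  have bl: "B pA < pA" by (rule B_pA)
  have Ap: "A pA = pA" by (rule pA_props(3))
  have p1: "pA \<le> 1" by (rule pA_props(2))
  have "\<forall>t\<le>length ws. 0 \<le> pos A B ws x t \<and> pos A B ws x t \<le> pA \<and> cnt ws t \<le> 1 \<and>
          (cnt ws t = 1 \<longrightarrow> pos A B ws x t < pA)"
  proof (intro allI impI)
    fix t assume "t \<le> length ws"
    then show "0 \<le> pos A B ws x t \<and> pos A B ws x t \<le> pA \<and> cnt ws t \<le> 1 \<and>
          (cnt ws t = 1 \<longrightarrow> pos A B ws x t < pA)"
    proof (induction t)
      case 0
      have "0 \<le> x" "x \<le> pA" using x0 b0 Ap by linarith+
      then show ?case by simp
    next
      case (Suc t)
      then have IH: "0 \<le> pos A B ws x t" "pos A B ws x t \<le> pA" "cnt ws t \<le> 1"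
          "cnt ws t = 1 \<longrightarrow> pos A B ws x t < pA" and tl: "t < length ws" by auto
      from assms tl have c: "(ws!t \<longrightarrow> pA \<le> pos A B ws x t) \<and> (\<not> ws!t \<longrightarrow> pos A B ws x t \<le> pA)"
        unfolding seg_def by blast
      define p where "p = pos A B ws x t"
      show ?case
      proof (cases "ws!t")
        case True
        then have p: "p = pA" using c IH unfolding p_def by linarith
        then have "cnt ws t = 0" using IH bl unfolding p_def by auto
        then have cs: "cnt ws (Suc t) = 1" using True by (simp add: cnt_Suc)
        have ps: "pos A B ws x (Suc t) = B pA" using True p by (simp add: p_def)
        show ?thesis unfolding cs ps using b0 bl by simp
      next
        case False
        have p01: "0 \<le> p" "p \<le> pA" using IH unfolding p_def by auto
        have a1: "A p \<le> pA" using A_le_pA[OF p01] .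
        have a2: "cnt ws t = 1 \<longrightarrow> A p < pA"
        proof
          assume "cnt ws t = 1"
          then have "p < pA" using IH unfolding p_def by blast
          then have "A p < A pA" using monoA[OF p01(1) _ p1] by blast
          then show "A p < pA" using Ap by simp
        qed
        have a3: "0 \<le> A p" using rangeA[of p] p01 p1 by linarith
        have cs: "cnt ws (Suc t) = cnt ws t" using False by (simp add: cnt_Suc)
        have ps: "pos A B ws x (Suc t) = A p" using False by (simp add: p_def)
        show ?thesis unfolding cs ps using a1 a2 a3 IH(3) by blast
      qed
    qed
  qed
  then show ?thesis by blast
qed

lemma cnt_at_pB: assumes "seg A B pB ws x"
  shows "length ws \<le> cnt ws (length ws) + 1"
proof -
  have pBA: "pB \<le> pA" using pB_lt by linarith
  have x0: "B pB \<le> x" "x \<le> A pB" using assms unfolding seg_def by blast+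
  have Bp: "B pB = pB" by (rule pB_props(3))
  have a1: "A pB \<le> 1" using I01(2)[OF order_refl pBA] .
  have ag: "pB < A pB" using A_gt[OF pB_props(1) pB_lt] .
  have p0: "0 \<le> pB" by (rule pB_props(1))
  have "\<forall>t\<le>length ws. pB \<le> pos A B ws x t \<and> pos A B ws x t \<le> 1 \<and> t \<le> cnt ws t + 1 \<and>
          (t = cnt ws t + 1 \<longrightarrow> pB < pos A B ws x t)"
  proof (intro allI impI)
    fix t assume "t \<le> length ws"
    then show "pB \<le> pos A B ws x t \<and> pos A B ws x t \<le> 1 \<and> t \<le> cnt ws t + 1 \<and>
          (t = cnt ws t + 1 \<longrightarrow> pB < pos A B ws x t)"
    proof (induction t)
      case 0
      have "pB \<le> x" "x \<le> 1" using x0 a1 Bp by linarith+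
      then show ?case by simp
    next
      case (Suc t)
      then have IH: "pB \<le> pos A B ws x t" "pos A B ws x t \<le> 1" "t \<le> cnt ws t + 1"
          "t = cnt ws t + 1 \<longrightarrow> pB < pos A B ws x t" and tl: "t < length ws" by auto
      have ct: "cnt ws t \<le> t" by (rule cnt_le)
      from assms tl have c: "(ws!t \<longrightarrow> pB \<le> pos A B ws x t) \<and> (\<not> ws!t \<longrightarrow> pos A B ws x t \<le> pB)"
        unfolding seg_def by blast
      define p where "p = pos A B ws x t"
      show ?case
      proof (cases "ws!t")
        case False
        then have p: "p = pB" using c IH unfolding p_def by linarith
        then have "t = cnt ws t" using IH ct unfolding p_def by auto
        then have cs: "Suc t = cnt ws (Suc t) + 1" using False by (simp add: cnt_Suc)
        have ps: "pos A B ws x (Suc t) = A pB" using False p by (simp add: p_def)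
        show ?thesis unfolding ps using cs ag a1 by simp
      next
        case True
        have p01: "pB \<le> p" "p \<le> 1" using IH unfolding p_def by auto
        have b1: "B pB \<le> B p" using monoB'[OF p0 p01] .
        have b2: "t = cnt ws t + 1 \<longrightarrow> pB < B p"
        proof
          assume "t = cnt ws t + 1"
          then have "pB < p" using IH unfolding p_def by blast
          then have "B pB < B p" using monoB[OF p0 _ p01(2)] by blast
          then show "pB < B p" using Bp by simp
        qed
        have b3: "B p \<le> 1" using rangeB[of p] p01 p0 by linarith
        have cs: "cnt ws (Suc t) = cnt ws t + 1" using True by (simp add: cnt_Suc)
        have ps: "pos A B ws x (Suc t) = B p" using True by (simp add: p_def)
        show ?thesis unfolding cs ps using b1 b2 b3 Bp IH(3) by simp
      qed
    qed
  qed
  then show ?thesis by blast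
qed


lemma cont_pos: "continuous_on UNIV (\<lambda>p::real\<times>real. pos A B ws (snd p) t)"
proof (induction t)
  case 0
  then show ?case by (simp add: continuous_on_snd continuous_on_id)
next
  case (Suc t)
  show ?case
  proof (cases "ws!t")
    case True
    have "continuous_on UNIV (\<lambda>p::real\<times>real. B (pos A B ws (snd p) t))"
      by (rule continuous_on_compose2[OF contB Suc.IH]) auto
    then show ?thesis using True by simp
  next
    case False
    have "continuous_on UNIV (\<lambda>p::real\<times>real. A (pos A B ws (snd p) t))"
      by (rule continuous_on_compose2[OF contA Suc.IH]) auto
    then show ?thesis using False by simp
  qed
qed

lemma cont_fstA: "continuous_on UNIV (\<lambda>p::real\<times>real. A (fst p))"
  by (rule continuous_on_compose2[OF contA continuous_on_fst[OF continuous_on_id]]) auto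
lemma cont_fstB: "continuous_on UNIV (\<lambda>p::real\<times>real. B (fst p))"
  by (rule continuous_on_compose2[OF contB continuous_on_fst[OF continuous_on_id]]) auto

lemma open_const_set: "open {p::real\<times>real. P}"
  by (cases P) auto

definition K :: "bool list \<Rightarrow> (real \<times> real) set" where
  "K ws = {p. pB \<le> fst p \<and> fst p \<le> pA \<and> 0 \<le> snd p \<and> snd p \<le> 1 \<and> seg A B (fst p) ws (snd p)}"

lemma closed_seg: "closed {p::real\<times>real. seg A B (fst p) ws (snd p)}"
proof -
  have cf: "continuous_on UNIV (\<lambda>p::real\<times>real. fst p)" by (rule continuous_on_fst[OF continuous_on_id])
  have cs: "continuous_on UNIV (\<lambda>p::real\<times>real. snd p)" by (rule continuous_on_snd[OF continuous_on_id])
  have c1: "closed {p::real\<times>real. B (fst p) \<le> snd p}" by (rule closed_Collect_le[OF cont_fstB cs])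
  have c2: "closed {p::real\<times>real. snd p \<le> A (fst p)}" by (rule closed_Collect_le[OF cs cont_fstA])
  have c3: "closed {p::real\<times>real. \<forall>t. t < length ws \<longrightarrow>
      ((ws!t \<longrightarrow> fst p \<le> pos A B ws (snd p) t) \<and> (\<not> ws!t \<longrightarrow> pos A B ws (snd p) t \<le> fst p))}"
  proof (rule closed_Collect_all)
    fix t
    show "closed {p::real\<times>real. t < length ws \<longrightarrow>
      ((ws!t \<longrightarrow> fst p \<le> pos A B ws (snd p) t) \<and> (\<not> ws!t \<longrightarrow> pos A B ws (snd p) t \<le> fst p))}"
      apply (rule closed_Collect_imp[OF open_const_set])
      apply (rule closed_Collect_conj)
       apply (rule closed_Collect_imp[OF open_const_set])
       apply (rule closed_Collect_le[OF cf cont_pos])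
      apply (rule closed_Collect_imp[OF open_const_set])
      apply (rule closed_Collect_le[OF cont_pos cf])
      done
  qed
  have "closed ({p::real\<times>real. B (fst p) \<le> snd p} \<inter> {p. snd p \<le> A (fst p)} \<inter> {p::real\<times>real. \<forall>t. t < length ws \<longrightarrow>
      ((ws!t \<longrightarrow> fst p \<le> pos A B ws (snd p) t) \<and> (\<not> ws!t \<longrightarrow> pos A B ws (snd p) t \<le> fst p))})"
    using c1 c2 c3 by (intro closed_Int)
  moreover have "{p::real\<times>real. seg A B (fst p) ws (snd p)} = {p::real\<times>real. B (fst p) \<le> snd p} \<inter> {p. snd p \<le> A (fst p)} \<inter> {p::real\<times>real. \<forall>t. t < length ws \<longrightarrow>
      ((ws!t \<longrightarrow> fst p \<le> pos A B ws (snd p) t) \<and> (\<not> ws!t \<longrightarrow> pos A B ws (snd p) t \<le> fst p))}"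
    unfolding seg_def by blast
  ultimately show ?thesis by simp
qed

lemma compact_K: "compact (K ws)"
proof -
  have "K ws = ({pB..pA} \<times> {0..1}) \<inter> {p::real\<times>real. seg A B (fst p) ws (snd p)}"
    unfolding K_def by auto
  moreover have "compact ({pB..pA} \<times> {0..1::real})" by (intro compact_Times compact_Icc)
  ultimately show ?thesis using closed_seg by (simp add: compact_Int_closed)
qed

definition Hi :: "real \<Rightarrow> real \<Rightarrow> nat \<Rightarrow> bool" where
  "Hi \<alpha> s n \<longleftrightarrow> (\<exists>ws x. length ws = n \<and> seg A B s ws x \<and> real n * \<alpha> \<le> real (cnt ws n))"
definition Lo :: "real \<Rightarrow> real \<Rightarrow> nat \<Rightarrow> bool" where
  "Lo \<alpha> s n \<longleftrightarrow> (\<exists>ws x. length ws = n \<and> seg A B s ws x \<and> real (cnt ws n) \<le> real n * \<alpha>)"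

lemma seg_x01: assumes "pB \<le> s" "s \<le> pA" "seg A B s ws x" shows "0 \<le> x" "x \<le> 1"
proof -
  have "B s \<le> x" "x \<le> A s" using assms(3) unfolding seg_def by blast+
  then show "0 \<le> x" "x \<le> 1" using I01[OF assms(1,2)] by linarith+
qed

lemma closed_gen:
  fixes P :: "bool list \<Rightarrow> bool"
  shows "closed {s. pB \<le> s \<and> s \<le> pA \<and> (\<exists>ws x. length ws = n \<and> seg A B s ws x \<and> P ws)}"
proof -
  let ?W = "{ws. length ws = n \<and> P ws}"
  have fin: "finite ?W"
  proof (rule finite_subset)
    show "?W \<subseteq> {xs. set xs \<subseteq> (UNIV::bool set) \<and> length xs = n}" by auto
    show "finite {xs. set xs \<subseteq> (UNIV::bool set) \<and> length xs = n}" by (rule finite_lists_length_eq) simp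
  qed
  have eq: "{s. pB \<le> s \<and> s \<le> pA \<and> (\<exists>ws x. length ws = n \<and> seg A B s ws x \<and> P ws)} = (\<Union>ws\<in>?W. fst ` K ws)"
  proof (intro equalityI subsetI)
    fix s assume "s \<in> {s. pB \<le> s \<and> s \<le> pA \<and> (\<exists>ws x. length ws = n \<and> seg A B s ws x \<and> P ws)}"
    then obtain ws x where h: "pB \<le> s" "s \<le> pA" "length ws = n" "seg A B s ws x" "P ws" by blast
    have "(s, x) \<in> K ws" using h seg_x01[OF h(1,2,4)] unfolding K_def by auto
    then show "s \<in> (\<Union>ws\<in>?W. fst ` K ws)" using h by force
  next
    fix s assume "s \<in> (\<Union>ws\<in>?W. fst ` K ws)"
    then obtain ws p where "ws \<in> ?W" "p \<in> K ws" "s = fst p" by blast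
    then show "s \<in> {s. pB \<le> s \<and> s \<le> pA \<and> (\<exists>ws x. length ws = n \<and> seg A B s ws x \<and> P ws)}"
      unfolding K_def by auto
  qed
  have "closed (\<Union>ws\<in>?W. fst ` K ws)"
  proof (rule closed_UN[OF fin], intro ballI)
    fix ws
    have "compact (fst ` K ws)" by (rule compact_continuous_image[OF continuous_on_fst[OF continuous_on_id] compact_K])
    then show "closed (fst ` K ws)" by (rule compact_imp_closed)
  qed
  then show ?thesis using eq by simp
qed

definition CT :: "real \<Rightarrow> real set" where
  "CT \<alpha> = {s. pB \<le> s \<and> s \<le> pA \<and> (\<forall>n\<ge>1. Hi \<alpha> s n)}"
definition CU :: "real \<Rightarrow> real set" where
  "CU \<alpha> = {s. pB \<le> s \<and> s \<le> pA \<and> (\<forall>n\<ge>1. Lo \<alpha> s n)}"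

lemma closed_CT: "closed (CT \<alpha>)"
proof -
  have "CT \<alpha> = {pB..pA} \<inter> (\<Inter>n\<in>{1..}. {s. pB \<le> s \<and> s \<le> pA \<and> (\<exists>ws x. length ws = n \<and> seg A B s ws x \<and> real n * \<alpha> \<le> real (cnt ws n))})"
    unfolding CT_def Hi_def by auto
  moreover have "closed ({pB..pA} \<inter> (\<Inter>n\<in>{1..}. {s. pB \<le> s \<and> s \<le> pA \<and> (\<exists>ws x. length ws = n \<and> seg A B s ws x \<and> real n * \<alpha> \<le> real (cnt ws n))}))"
    by (intro closed_Int closed_INT ballI closed_gen closed_atLeastAtMost)
  ultimately show ?thesis by simp
qed

lemma closed_CU: "closed (CU \<alpha>)"
proof -
  have "CU \<alpha> = {pB..pA} \<inter> (\<Inter>n\<in>{1..}. {s. pB \<le> s \<and> s \<le> pA \<and> (\<exists>ws x. length ws = n \<and> seg A B s ws x \<and> real (cnt ws n) \<le> real n * \<alpha>)})"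
    unfolding CU_def Lo_def by auto
  moreover have "closed ({pB..pA} \<inter> (\<Inter>n\<in>{1..}. {s. pB \<le> s \<and> s \<le> pA \<and> (\<exists>ws x. length ws = n \<and> seg A B s ws x \<and> real (cnt ws n) \<le> real n * \<alpha>)}))"
    by (intro closed_Int closed_INT ballI closed_gen closed_atLeastAtMost)
  ultimately show ?thesis by simp
qed


primrec traj :: "real \<Rightarrow> nat \<Rightarrow> real" where
  "traj s 0 = s"
| "traj s (Suc t) = (if s < traj s t then B (traj s t) else A (traj s t))"

lemma traj_inv: assumes "pB \<le> s" "s \<le> pA" shows "B s \<le> traj s t \<and> traj s t \<le> A s"
proof (induction t)
  case 0
  have s0: "0 \<le> s" using assms pB_props(1) by linarith
  show ?case using B_le[OF assms] A_ge[OF s0 assms(2)] by simp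
next
  case (Suc t)
  show ?case
  proof (cases "s < traj s t")
    case True
    then have "B s \<le> B (traj s t) \<and> B (traj s t) \<le> A s" using inv_B[OF assms] Suc.IH by simp
    then show ?thesis using True by simp
  next
    case False
    then have "B s \<le> A (traj s t) \<and> A (traj s t) \<le> A s" using inv_A[OF assms] Suc.IH by simp
    then show ?thesis using False by simp
  qed
qed

definition blk :: "real \<Rightarrow> nat \<Rightarrow> nat \<Rightarrow> bool list" where
  "blk s k n = map (\<lambda>j. s < traj s (k+j)) [0..<n]"

lemma length_blk[simp]: "length (blk s k n) = n"
  by (simp add: blk_def)

lemma nth_blk: "t < n \<Longrightarrow> blk s k n ! t = (s < traj s (k+t))"
  by (simp add: blk_def)

lemma pos_blk: "t \<le> n \<Longrightarrow> pos A B (blk s k n) (traj s k) t = traj s (k+t)"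
proof (induction t)
  case 0 then show ?case by simp
next
  case (Suc t)
  then have "t < n" by simp
  then show ?case using Suc by (simp add: nth_blk)
qed

lemma seg_blk: assumes "pB \<le> s" "s \<le> pA" shows "seg A B s (blk s k n) (traj s k)"
  unfolding seg_def using traj_inv[OF assms, of k] by (simp add: pos_blk nth_blk)

lemma cnt_blk: "cnt (blk s k n) n = (\<Sum>j<n. if s < traj s (k+j) then 1 else 0)"
  unfolding cnt_def by (rule sum.cong) (auto simp: nth_blk)

lemma sum_split_nat: "(\<Sum>t<a+n. f t) = (\<Sum>t<a. f t) + (\<Sum>j<n. f (a+j::nat)::nat)"
  by (induction n) auto

lemma sum_blocks: "(\<Sum>t<k*n. f t) = (\<Sum>i<k. \<Sum>j<n. f (i*n+j::nat)::nat)"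
proof (induction k)
  case 0 then show ?case by simp
next
  case (Suc k)
  have "(\<Sum>t<Suc k*n. f t) = (\<Sum>t<k*n+n. f t)" by (simp add: add.commute)
  also have "\<dots> = (\<Sum>t<k*n. f t) + (\<Sum>j<n. f (k*n+j))" by (rule sum_split_nat)
  finally show ?case using Suc by simp
qed

lemma cover: assumes "pB \<le> s" "s \<le> pA" shows "s \<in> CT \<alpha> \<or> s \<in> CU \<alpha>"
proof (rule ccontr)
  assume "\<not> (s \<in> CT \<alpha> \<or> s \<in> CU \<alpha>)"
  then obtain n k where n: "n \<ge> 1" "\<not> Hi \<alpha> s n" and k: "k \<ge> 1" "\<not> Lo \<alpha> s k"
    using assms unfolding CT_def CU_def by auto
  define g where "g t = (if s < traj s t then 1 else 0::nat)" for t
  have bc: "cnt (blk s i m) m = (\<Sum>j<m. g (i+j))" for i m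
    unfolding cnt_blk g_def by simp
  have hi: "real (\<Sum>j<n. g (i*n+j)) < real n * \<alpha>" for i
  proof -
    have "\<not> (real n * \<alpha> \<le> real (cnt (blk s (i*n) n) n))"
    proof
      assume h: "real n * \<alpha> \<le> real (cnt (blk s (i*n) n) n)"
      have "Hi \<alpha> s n" unfolding Hi_def
        by (rule exI[of _ "blk s (i*n) n"], rule exI[of _ "traj s (i*n)"]) (use h seg_blk[OF assms] in simp)
      then show False using n(2) by simp
    qed
    then show ?thesis using bc[of "i*n" n] by simp
  qed
  have lo: "real (\<Sum>j<k. g (i*k+j)) > real k * \<alpha>" for i
  proof -
    have "\<not> (real (cnt (blk s (i*k) k) k) \<le> real k * \<alpha>)"
    proof
      assume h: "real (cnt (blk s (i*k) k) k) \<le> real k * \<alpha>"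
      have "Lo \<alpha> s k" unfolding Lo_def
        by (rule exI[of _ "blk s (i*k) k"], rule exI[of _ "traj s (i*k)"]) (use h seg_blk[OF assms] in simp)
      then show False using k(2) by simp
    qed
    then show ?thesis using bc[of "i*k" k] by simp
  qed
  have "real (\<Sum>t<k*n. g t) = (\<Sum>i<k. real (\<Sum>j<n. g (i*n+j)))"
    by (simp add: sum_blocks[of g k n])
  also have "\<dots> < (\<Sum>i<k. real n * \<alpha>)"
    by (rule sum_strict_mono) (use hi k in \<open>auto simp: lessThan_empty_iff\<close>)
  also have "\<dots> = real k * real n * \<alpha>" by simp
  finally have 1: "real (\<Sum>t<k*n. g t) < real k * real n * \<alpha>" .
  have "real (\<Sum>t<n*k. g t) = (\<Sum>i<n. real (\<Sum>j<k. g (i*k+j)))"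
    by (simp add: sum_blocks[of g n k])
  also have "\<dots> > (\<Sum>i<n. real k * \<alpha>)"
    by (rule sum_strict_mono) (use lo n in \<open>auto simp: lessThan_empty_iff\<close>)
  also have "(\<Sum>i<n. real k * \<alpha>) = real k * real n * \<alpha>" by simp
  finally have 2: "real (\<Sum>t<n*k. g t) > real k * real n * \<alpha>" .
  have "k * n = n * k" by simp
  then have "real (\<Sum>t<k*n. g t) = real (\<Sum>t<n*k. g t)" by metis
  then show False using 1 2 by linarith
qed


definition G :: "real \<Rightarrow> real \<Rightarrow> real" where
  "G s x = (if x \<le> s then A x else B x + (A s - B s))"

context
  fixes s :: real
  assumes sB: "pB < s" and sA: "s < pA"
begin

lemma s01: "0 \<le> s" "s \<le> 1" using sB sA pB_props(1) pA_props(2) by linarith+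

lemma As_gt: "s < A s" using A_gt[OF s01(1) sA] .
lemma Bs_lt: "B s < s" using B_lt[OF sB less_imp_le[OF sA]] .
lemma Bs0: "0 \<le> B s" using I01(1)[OF less_imp_le[OF sB] less_imp_le[OF sA]] .
lemma As1: "A s \<le> 1" using I01(2)[OF less_imp_le[OF sB] less_imp_le[OF sA]] .
lemma ell: "0 < A s - B s" using As_gt Bs_lt by linarith

lemma Gmono: assumes "B s \<le> x" "x < y" "y \<le> A s" shows "G s x < G s y"
proof -
  have x0: "0 \<le> x" using Bs0 assms by linarith
  have y1: "y \<le> 1" using As1 assms by linarith
  show ?thesis
  proof (cases "y \<le> s")
    case True
    then have "x \<le> s" using assms by linarith
    then show ?thesis using True monoA[OF x0 assms(2) y1] by (simp add: G_def)
  next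
    case False
    show ?thesis
    proof (cases "x \<le> s")
      case True
      have "A x \<le> A s" using monoA'[OF x0 True s01(2)] .
      moreover have "B s < B y" using monoB[OF s01(1) _ y1] False by simp
      ultimately show ?thesis using True False by (simp add: G_def)
    next
      case False2: False
      have "B x < B y" using monoB[OF x0 assms(2) y1] .
      then show ?thesis using False False2 by (simp add: G_def)
    qed
  qed
qed

lemma Gmono': assumes "B s \<le> x" "x \<le> y" "y \<le> A s" shows "G s x \<le> G s y"
  using Gmono[OF assms(1) _ assms(3)] assms(2) by (cases "x = y") auto

lemma GA: "G s (A s) = B (A s) + (A s - B s)"
  using As_gt by (simp add: G_def)
lemma GB: "G s (B s) = A (B s)"
  using Bs_lt by (simp add: G_def)
lemma gapG: "G s (A s) \<le> G s (B s) + (A s - B s)"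
  using gap[OF s01] GA GB by simp

lemma Gstep:
  fixes k m :: int
  assumes x: "B s \<le> x" "x \<le> A s" and y: "B s \<le> y" "y \<le> A s"
    and lt: "x + of_int k * (A s - B s) < y + of_int m * (A s - B s)"
  shows "G s x + of_int k * (A s - B s) < G s y + of_int m * (A s - B s)"
proof -
  define l where "l = A s - B s"
  have l0: "0 < l" using ell unfolding l_def .
  have lt': "x + of_int k * l < y + of_int m * l" using lt unfolding l_def .
  have GxA: "G s x \<le> G s (A s)" using Gmono'[OF x(1) x(2)] Bs_lt As_gt by simp
  have GBy: "G s (B s) \<le> G s y" using Gmono'[OF order_refl y(1)] y by simp
  have gl: "G s (A s) \<le> G s (B s) + l" using gapG unfolding l_def .
  consider "k > m" | "k = m" | "k < m" by linarith
  then have "G s x + of_int k * l < G s y + of_int m * l"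
  proof cases
    case 1
    then have "real_of_int k \<ge> real_of_int m + 1" by simp
    then have "real_of_int k * l \<ge> (real_of_int m + 1) * l" using l0 by (intro mult_right_mono) auto
    then have "x + l < y" using lt' by (simp add: algebra_simps)
    moreover have "x + l \<ge> A s" using x(1) unfolding l_def by simp
    ultimately show ?thesis using y(2) by linarith
  next
    case 2
    then have "x < y" using lt' by simp
    then show ?thesis using Gmono[OF x(1) _ y(2)] 2 by simp
  next
    case 3
    then have km: "real_of_int k + 1 \<le> real_of_int m" by simp
    then have km': "(real_of_int k + 1) * l \<le> real_of_int m * l" using l0 by (intro mult_right_mono) auto
    show ?thesis
    proof (cases "x < A s")
      case True
      then have "G s x < G s (A s)" using Gmono[OF x(1) True order_refl] by simp
      then show ?thesis using gl GBy km' by (simp add: algebra_simps)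
    next
      case False
      then have xA: "x = A s" using x(2) by simp
      show ?thesis
      proof (cases "real_of_int m = real_of_int k + 1")
        case True
        then have "B s + l + of_int k * l < y + (of_int k + 1) * l" using lt' xA unfolding l_def by simp
        then have "B s < y" by (simp add: algebra_simps)
        then have "G s (B s) < G s y" using Gmono[OF order_refl _ y(2)] by simp
        then show ?thesis using xA gl True by (simp add: algebra_simps)
      next
        case False
        have "m \<noteq> k + 1"
        proof
          assume "m = k + 1"
          then show False using False by simp
        qed
        then have "k + 2 \<le> m" using 3 by linarith
        then have "real_of_int (k + 2) \<le> real_of_int m" by (simp only: of_int_le_iff)
        then have "real_of_int k + 2 \<le> real_of_int m" by simp
        then have "(real_of_int k + 2) * l \<le> real_of_int m * l" using l0 by (intro mult_right_mono) auto
        then show ?thesis using xA gl GBy l0 by (simp add: algebra_simps)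
      qed
    qed
  qed
  then show ?thesis unfolding l_def .
qed

lemma move: assumes "B s \<le> p" "p \<le> A s" "c \<longrightarrow> s \<le> p" "\<not> c \<longrightarrow> p \<le> s"
  shows "(if c then B p else A p) + (if c then A s - B s else 0) = G s p"
proof (cases c)
  case True
  then show ?thesis using assms by (cases "p = s") (auto simp: G_def)
next
  case False
  then show ?thesis using assms by (simp add: G_def)
qed

lemma interlace:
  assumes "seg A B s ws x" "seg A B s ws' y" "length ws = n" "length ws' = n"
  shows "cnt ws n \<le> cnt ws' n + 2"
proof -
  define l where "l = A s - B s"
  have l0: "0 < l" using ell unfolding l_def .
  have sBA: "pB \<le> s" "s \<le> pA" using sB sA by linarith+
  have main: "\<forall>t\<le>n. pos A B ws x t + real (cnt ws t) * l < pos A B ws' y t + (real (cnt ws' t) + 2) * l"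
  proof (intro allI impI)
    fix t assume "t \<le> n"
    then show "pos A B ws x t + real (cnt ws t) * l < pos A B ws' y t + (real (cnt ws' t) + 2) * l"
    proof (induction t)
      case 0
      have "x \<le> A s" "B s \<le> y" using assms(1,2) unfolding seg_def by blast+
      then show ?case using l0 unfolding l_def by simp
    next
      case (Suc t)
      then have tn: "t < n" and IH: "pos A B ws x t + real (cnt ws t) * l < pos A B ws' y t + (real (cnt ws' t) + 2) * l" by auto
      define P where "P = pos A B ws x t"
      define Q where "Q = pos A B ws' y t"
      have PI: "B s \<le> P" "P \<le> A s" using pos_inv[OF sBA assms(1), of t] tn assms(3) unfolding P_def by auto
      have QI: "B s \<le> Q" "Q \<le> A s" using pos_inv[OF sBA assms(2), of t] tn assms(4) unfolding Q_def by auto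
      have cP: "(ws!t \<longrightarrow> s \<le> P) \<and> (\<not> ws!t \<longrightarrow> P \<le> s)" using assms(1) tn assms(3) unfolding seg_def P_def by auto
      have cQ: "(ws'!t \<longrightarrow> s \<le> Q) \<and> (\<not> ws'!t \<longrightarrow> Q \<le> s)" using assms(2) tn assms(4) unfolding seg_def Q_def by auto
      have st: "G s P + of_int (int (cnt ws t)) * l < G s Q + of_int (int (cnt ws' t) + 2) * l"
        using Gstep[OF PI QI, of "int (cnt ws t)" "int (cnt ws' t) + 2"] IH unfolding l_def P_def Q_def by simp
      have mP: "(if ws!t then B P else A P) + (if ws!t then l else 0) = G s P"
        using move[OF PI] cP unfolding l_def by blast
      have mQ: "(if ws'!t then B Q else A Q) + (if ws'!t then l else 0) = G s Q"
        using move[OF QI] cQ unfolding l_def by blast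
      have eP: "pos A B ws x (Suc t) + real (cnt ws (Suc t)) * l = G s P + real (cnt ws t) * l"
        using mP unfolding P_def by (cases "ws!t") (auto simp: cnt_Suc algebra_simps)
      have eQ: "pos A B ws' y (Suc t) + (real (cnt ws' (Suc t)) + 2) * l = G s Q + (real (cnt ws' t) + 2) * l"
        using mQ unfolding Q_def by (cases "ws'!t") (auto simp: cnt_Suc algebra_simps)
      show ?case using st eP eQ by simp
    qed
  qed
  then have fin: "pos A B ws x n + real (cnt ws n) * l < pos A B ws' y n + (real (cnt ws' n) + 2) * l" by simp
  have "B s \<le> pos A B ws x n" using pos_inv[OF sBA assms(1), of n] assms(3) by simp
  moreover have "pos A B ws' y n \<le> A s" using pos_inv[OF sBA assms(2), of n] assms(4) by simp
  ultimately have "real (cnt ws n) * l < (real (cnt ws' n) + 3) * l" using fin unfolding l_def by (simp add: algebra_simps)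
  then have "real (cnt ws n) < real (cnt ws' n) + 3" using l0 by (simp add: mult_less_cancel_right)
  then show ?thesis by linarith
qed

end


lemma exists_irrat: "\<exists>\<alpha>::real. 1/3 < \<alpha> \<and> \<alpha> < 1/2 \<and> \<alpha> \<notin> \<rat>"
proof (rule ccontr)
  assume "\<not> ?thesis"
  then have "{1/3<..<1/2::real} \<subseteq> \<rat>" by auto
  then have "countable {1/3<..<1/2::real}" using countable_rat countable_subset by blast
  then show False using uncountable_open_interval[of "1/3::real" "1/2"] by simp
qed

theorem main_gm:
  "\<exists>s x w. 0 < s \<and> s < 1 \<and> x 0 = s \<and> (\<forall>t. 0 \<le> x t \<and> x t \<le> 1) \<and>
     (\<forall>t. x (Suc t) = (if w t then B (x t) else A (x t))) \<and>
     (\<forall>t. w t \<longrightarrow> s \<le> x t) \<and> (\<forall>t. \<not> w t \<longrightarrow> x t \<le> s) \<and>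
     (\<forall>N q. 1 \<le> q \<longrightarrow> \<not> (\<forall>n\<ge>N. w (n+q) = w n))"
proof -
  obtain \<alpha> :: real where al: "1/3 < \<alpha>" "\<alpha> < 1/2" "\<alpha> \<notin> \<rat>" using exists_irrat by blast
  have pBA: "pB \<le> pA" using pB_lt by linarith
  have nA: "pA \<notin> CT \<alpha>"
  proof
    assume "pA \<in> CT \<alpha>"
    then have "Hi \<alpha> pA 3" unfolding CT_def by auto
    then obtain ws x where h: "length ws = 3" "seg A B pA ws x" "real 3 * \<alpha> \<le> real (cnt ws 3)"
      unfolding Hi_def by blast
    have "cnt ws 3 \<le> 1" using cnt_at_pA[OF h(2)] h(1) by simp
    then have "real (cnt ws 3) \<le> 1" by simp
    then show False using h(3) al(1) by simp
  qed
  have nB: "pB \<notin> CU \<alpha>"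
  proof
    assume "pB \<in> CU \<alpha>"
    then have "Lo \<alpha> pB 2" unfolding CU_def by auto
    then obtain ws x where h: "length ws = 2" "seg A B pB ws x" "real (cnt ws 2) \<le> real 2 * \<alpha>"
      unfolding Lo_def by blast
    have "2 \<le> cnt ws 2 + 1" using cnt_at_pB[OF h(2)] h(1) by simp
    then have "1 \<le> real (cnt ws 2)" by simp
    then show False using h(3) al(2) by simp
  qed
  have cov: "{pB..pA} \<subseteq> CT \<alpha> \<union> CU \<alpha>"
  proof
    fix y assume "y \<in> {pB..pA}"
    then show "y \<in> CT \<alpha> \<union> CU \<alpha>" using cover[of y \<alpha>] by simp
  qed
  have "pA \<in> CU \<alpha> \<inter> {pB..pA}" using cover[OF pBA order_refl, of \<alpha>] nA pBA by auto
  moreover have "pB \<in> CT \<alpha> \<inter> {pB..pA}" using cover[OF order_refl pBA, of \<alpha>] nB pBA by auto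
  ultimately have "CT \<alpha> \<inter> CU \<alpha> \<inter> {pB..pA} \<noteq> {}"
    using connected_closedD[OF connected_Icc _ cov closed_CT closed_CU] by blast
  then obtain s where sT: "s \<in> CT \<alpha>" and sU: "s \<in> CU \<alpha>" and sI: "pB \<le> s" "s \<le> pA" by auto
  have sB: "pB < s" using sT nB sU sI by (cases "s = pB") auto
  have sA: "s < pA" using sT nA sI by (cases "s = pA") auto
  have sBA: "pB \<le> s" "s \<le> pA" using sI .
  define x where "x = traj s"
  define w where "w t = (s < traj s t)" for t
  have x01: "0 \<le> x t \<and> x t \<le> 1" for t
    using traj_inv[OF sBA, of t] I01[OF sBA] unfolding x_def by auto
  have nonper: "\<not> (\<forall>n\<ge>N. w (n+q) = w n)" if q1: "1 \<le> q" for N q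
  proof
    assume per: "\<forall>n\<ge>N. w (n+q) = w n"
    have per2: "w (N + k*q + j) = w (N + j)" for k j
    proof (induction k)
      case 0 then show ?case by simp
    next
      case (Suc k)
      have "w (N + Suc k * q + j) = w ((N + k*q + j) + q)" by (simp add: algebra_simps)
      also have "\<dots> = w (N + k*q + j)" using per by simp
      finally show ?case using Suc by simp
    qed
    define g where "g t = (if s < traj s t then 1 else 0::nat)" for t
    define p where "p = (\<Sum>j<q. g (N+j))"
    have gw: "g t = (if w t then 1 else 0)" for t unfolding g_def w_def by simp
    have bc: "(\<Sum>j<k*q. g (N+j)) = k * p" for k
    proof (induction k)
      case 0 then show ?case by simp
    next
      case (Suc k)
      have "(\<Sum>j<Suc k*q. g (N+j)) = (\<Sum>j<k*q+q. g (N+j))" by (simp add: add.commute)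
      also have "\<dots> = (\<Sum>j<k*q. g (N+j)) + (\<Sum>j<q. g (N+(k*q+j)))" by (rule sum_split_nat)
      also have "(\<Sum>j<q. g (N+(k*q+j))) = p"
        unfolding p_def by (rule sum.cong) (auto simp: gw per2 add.assoc[symmetric])
      finally show ?case using Suc by simp
    qed
    have bnd: "\<bar>real k * (real q * \<alpha> - real p)\<bar> \<le> 2" if k1: "1 \<le> k" for k
    proof -
      define n where "n = k*q"
      have n1: "1 \<le> n" unfolding n_def using k1 q1 by simp
      have bseg: "seg A B s (blk s N n) (traj s N)" by (rule seg_blk[OF sBA])
      have bcnt: "cnt (blk s N n) n = k * p" unfolding cnt_blk n_def using bc[of k] by (simp add: g_def)
      obtain ws1 x1 where h1: "length ws1 = n" "seg A B s ws1 x1" "real n * \<alpha> \<le> real (cnt ws1 n)"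
        using sT n1 unfolding CT_def Hi_def by blast
      obtain ws2 x2 where h2: "length ws2 = n" "seg A B s ws2 x2" "real (cnt ws2 n) \<le> real n * \<alpha>"
        using sU n1 unfolding CU_def Lo_def by blast
      have i1: "cnt ws1 n \<le> k*p + 2" using interlace[OF sB sA h1(2) bseg h1(1)] bcnt by simp
      have i2: "k*p \<le> cnt ws2 n + 2" using interlace[OF sB sA bseg h2(2) _ h2(1)] bcnt by simp
      have r1: "real (cnt ws1 n) \<le> real k * real p + 2" using i1 by (metis of_nat_add of_nat_le_iff of_nat_mult of_nat_numeral)
      have r2: "real k * real p \<le> real (cnt ws2 n) + 2" using i2 by (metis of_nat_add of_nat_le_iff of_nat_mult of_nat_numeral)
      have rn: "real n * \<alpha> = real k * real q * \<alpha>" unfolding n_def by simp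
      have "real k * real q * \<alpha> \<le> real k * real p + 2" using h1(3) r1 rn by linarith
      moreover have "real k * real p \<le> real k * real q * \<alpha> + 2" using h2(3) r2 rn by linarith
      ultimately show ?thesis by (simp add: abs_le_iff algebra_simps)
    qed
    define \<delta> where "\<delta> = real q * \<alpha> - real p"
    have d0: "\<delta> \<noteq> 0"
    proof
      assume "\<delta> = 0"
      then have "\<alpha> = real p / real q" using q1 unfolding \<delta>_def by (simp add: field_simps)
      then have "\<alpha> \<in> \<rat>" by simp
      then show False using al(3) by simp
    qed
    define k where "k = nat \<lceil>3 / \<bar>\<delta>\<bar>\<rceil>"
    have dpos: "0 < \<bar>\<delta>\<bar>" using d0 by simp
    have "3 / \<bar>\<delta>\<bar> \<le> real k" unfolding k_def by linarith
    then have k3: "3 \<le> real k * \<bar>\<delta>\<bar>" using dpos by (simp add: field_simps)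
    then have "1 \<le> k" using dpos by (cases k) auto
    then have "\<bar>real k * \<delta>\<bar> \<le> 2" using bnd unfolding \<delta>_def by blast
    then show False using k3 by (simp add: abs_mult)
  qed
  show ?thesis
    apply (rule exI[of _ s], rule exI[of _ x], rule exI[of _ w])
    using sB sA pB_props(1) pA_props(2) x01 nonper
    by (auto simp: x_def w_def)
qed

end


definition clmp :: "real \<Rightarrow> real" where "clmp x = max 0 (min 1 x)"

lemma clamp_id: "0 \<le> x \<Longrightarrow> x \<le> 1 \<Longrightarrow> clmp x = x" by (simp add: clmp_def)
lemma clamp_range: "0 \<le> clmp x" "clmp x \<le> 1" by (auto simp: clmp_def)
lemma cont_clamp: "continuous_on UNIV clmp" unfolding clmp_def by (intro continuous_intros)

definition Af :: "real \<Rightarrow> real \<Rightarrow> real \<Rightarrow> real" where "Af c d x = 1 - (1-x)/(c + d * (1-x))"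
definition Bf :: "real \<Rightarrow> real \<Rightarrow> real \<Rightarrow> real" where "Bf e f x = x/(e + f * x)"

lemma pos_lin: fixes c d u :: real assumes "0 < c" "0 < c + d" "0 \<le> u" "u \<le> 1" shows "0 < c + d * u"
proof (cases "d \<ge> 0")
  case True then show ?thesis using assms by (simp add: add_pos_nonneg)
next
  case False
  then have "d * 1 \<le> d * u" using assms by (intro mult_left_mono_neg) auto
  then show ?thesis using assms by simp
qed

context
  fixes c d e f :: real
  assumes c0: "0 < c" and e0: "0 < e" and C1: "0 < c + d - 1" and E1: "0 < e + f - 1"
    and CE: "1 \<le> (c + d - 1) * (e + f - 1)"
begin

lemma PA: "0 \<le> u \<Longrightarrow> u \<le> 1 \<Longrightarrow> 0 < c + d * u" using pos_lin[of c d u] c0 C1 by simp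
lemma PB: "0 \<le> u \<Longrightarrow> u \<le> 1 \<Longrightarrow> 0 < e + f * u" using pos_lin[of e f u] e0 E1 by simp

lemma Af_range: assumes "0 \<le> x" "x \<le> 1" shows "0 \<le> Af c d x" "Af c d x \<le> 1"
proof -
  define u where "u = 1 - x"
  have u: "0 \<le> u" "u \<le> 1" using assms unfolding u_def by auto
  have P: "0 < c + d * u" using PA[OF u] .
  have "u \<le> c + d * u"
  proof -
    have "0 \<le> c * (1-u)" using c0 u by simp
    moreover have "0 \<le> (c+d-1) * u" using C1 u by simp
    ultimately show ?thesis by (simp add: algebra_simps)
  qed
  then have "u/(c+d * u) \<le> 1" using P by simp
  moreover have "0 \<le> u/(c+d * u)" using P u by simp
  ultimately show "0 \<le> Af c d x" "Af c d x \<le> 1" unfolding Af_def u_def[symmetric] by simp_all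
qed

lemma Bf_range: assumes "0 \<le> x" "x \<le> 1" shows "0 \<le> Bf e f x" "Bf e f x \<le> 1"
proof -
  have P: "0 < e + f * x" using PB[OF assms] .
  have "x \<le> e + f * x"
  proof -
    have "0 \<le> e * (1-x)" using e0 assms by simp
    moreover have "0 \<le> (e+f-1) * x" using E1 assms by simp
    ultimately show ?thesis by (simp add: algebra_simps)
  qed
  then show "Bf e f x \<le> 1" using P unfolding Bf_def by simp
  show "0 \<le> Bf e f x" using P assms unfolding Bf_def by simp
qed

lemma Af_mono: assumes "0 \<le> x" "x < y" "y \<le> 1" shows "Af c d x < Af c d y"
proof -
  define u where "u = 1 - x"
  define vv where "vv = 1 - y"
  have uv: "0 \<le> vv" "vv < u" "u \<le> 1" using assms unfolding u_def vv_def by auto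
  have Pu: "0 < c + d * u" using PA uv by simp
  have Pv: "0 < c + d* vv" using PA uv by simp
  have "vv * (c+d * u) < u * (c+d* vv)" using uv c0 by (simp add: algebra_simps)
  then have "vv/(c+d* vv) < u/(c+d * u)" using Pu Pv by (simp add: field_simps)
  then show ?thesis unfolding Af_def u_def[symmetric] vv_def[symmetric] by simp
qed

lemma Bf_mono: assumes "0 \<le> x" "x < y" "y \<le> 1" shows "Bf e f x < Bf e f y"
proof -
  have Px: "0 < e + f * x" using PB assms by simp
  have Py: "0 < e + f * y" using PB assms by simp
  have "x * (e+f * y) < y * (e+f * x)" using assms e0 by (simp add: algebra_simps)
  then show ?thesis using Px Py unfolding Bf_def by (simp add: field_simps)
qed

lemma Af1: "Af c d 1 = 1" by (simp add: Af_def)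
lemma Af0: "0 < Af c d 0"
proof -
  have "1/(c+d) < 1" using C1 by simp
  then show ?thesis by (simp add: Af_def)
qed
lemma Bf0: "Bf e f 0 = 0" by (simp add: Bf_def)

lemma disjf: assumes "0 \<le> y" "y \<le> 1" shows "Af c d y > y \<or> Bf e f y < y"
proof (rule ccontr)
  assume n: "\<not> (Af c d y > y \<or> Bf e f y < y)"
  then have n1: "Af c d y \<le> y" and n2: "y \<le> Bf e f y" by auto
  show False
  proof (cases "y = 0")
    case True then show False using n1 Af0 by simp
  next
    case False
    show False
    proof (cases "y = 1")
      case True
      have "1/(e+f) < 1" using E1 by simp
      then show False using n2 True by (simp add: Bf_def)
    next
      case False2: False
      define u where "u = 1 - y"
      have y: "0 < y" "y < 1" using assms False False2 by auto
      have u: "0 < u" "u < 1" using y unfolding u_def by auto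
      have P: "0 < c + d * u" using PA u by simp
      have Q: "0 < e + f * y" using PB y by simp
      have "1 - u/(c+d * u) \<le> 1 - u" using n1 unfolding Af_def u_def by simp
      then have "u \<le> u/(c+d * u)" by simp
      then have "u * (c+d * u) \<le> u" using P by (simp add: field_simps)
      then have h1: "c + d * u \<le> 1" using u by (simp add: mult_le_cancel_left1)
      have "y \<le> y/(e+f * y)" using n2 unfolding Bf_def .
      then have "y * (e+f * y) \<le> y" using Q by (simp add: field_simps)
      then have h2: "e + f * y \<le> 1" using y by (simp add: mult_le_cancel_left1)
      define C where "C = c + d - 1"
      define E where "E = e + f - 1"
      have g1: "C * u \<le> (1-c) * y" using h1 unfolding C_def u_def by (simp add: algebra_simps)
      have g2: "E * y \<le> (1-e) * u" using h2 unfolding E_def u_def by (simp add: algebra_simps)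
      have Cp: "0 < C" "0 < E" using C1 E1 unfolding C_def E_def by auto
      have "0 < C * u" using Cp u by simp
      then have c1: "c < 1" using g1 y by (smt (verit) mult_nonpos_nonneg)
      have "0 < E * y" using Cp y by simp
      then have e1: "e < 1" using g2 u by (smt (verit) mult_nonpos_nonneg)
      have "(C * u) * (E * y) \<le> ((1-c) * y) * ((1-e) * u)"
        by (rule mult_mono[OF g1 g2]) (use c1 y Cp in auto)
      then have "(C * E) * (u * y) \<le> ((1-c) * (1-e)) * (u * y)" by (simp add: algebra_simps)
      then have "C * E \<le> (1-c) * (1-e)" using u y by simp
      moreover have "(1-c) * (1-e) < 1"
      proof -
        have "(1-c) * (1-e) < 1 * 1" using c0 e0 c1 e1 by (intro mult_strict_mono) auto
        then show ?thesis by simp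
      qed
      ultimately show False using CE unfolding C_def E_def by simp
    qed
  qed
qed

lemma gapf: assumes "0 \<le> s" "s \<le> 1" shows "Bf e f (Af c d s) \<le> Af c d (Bf e f s)"
proof -
  define u where "u = 1 - s"
  have u: "0 \<le> u" "u \<le> 1" using assms unfolding u_def by auto
  define D1 where "D1 = e + f * s"
  define D2 where "D2 = c + d * u"
  define X where "X = e + (f-1) * s"
  define Y where "Y = c + (d-1) * u"
  have D1p: "0 < D1" using PB assms unfolding D1_def by simp
  have D2p: "0 < D2" using PA u unfolding D2_def by simp
  have Xp: "0 \<le> X"
  proof -
    have "0 \<le> e * (1-s)" using e0 assms by simp
    moreover have "0 \<le> (e+f-1) * s" using E1 assms by simp
    ultimately show ?thesis unfolding X_def by (simp add: algebra_simps)
  qed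
  have Yp: "0 \<le> Y"
  proof -
    have "0 \<le> c * (1-u)" using c0 u by simp
    moreover have "0 \<le> (c+d-1) * u" using C1 u by simp
    ultimately show ?thesis unfolding Y_def by (simp add: algebra_simps)
  qed
  have As: "Af c d s = Y/D2" unfolding Af_def Y_def D2_def u_def using D2p unfolding D2_def u_def
    by (simp add: field_simps)
  have Bs: "Bf e f s = s/D1" unfolding Bf_def D1_def ..
  have Ar: "0 \<le> Af c d s" "Af c d s \<le> 1" using Af_range[OF assms] by auto
  have Br: "0 \<le> Bf e f s" "Bf e f s \<le> 1" using Bf_range[OF assms] by auto
  have Q1: "0 < e + f * Af c d s" using PB Ar by simp
  have Q2: "0 < c + d * (1 - Bf e f s)" using PA Br by simp
  have den1: "e * D2 + f * Y = D2 * (e + f * Af c d s)" using As D2p by (simp add: field_simps)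
  have den2: "c * D1 + d * X = D1 * (c + d * (1 - Bf e f s))"
    using Bs D1p unfolding X_def D1_def by (simp add: field_simps)
  have den1p: "0 < e * D2 + f * Y" using den1 D2p Q1 by simp
  have den2p: "0 < c * D1 + d * X" using den2 D1p Q2 by simp
  have BA: "Bf e f (Af c d s) = Y/(e * D2 + f * Y)"
    unfolding Bf_def As using D2p by (simp add: field_simps)
  have AB: "Af c d (Bf e f s) = (c * D1 + (d-1) * X)/(c * D1 + d * X)"
  proof -
    have "1 - Bf e f s = X/D1" unfolding Bs X_def using D1p unfolding D1_def by (simp add: field_simps)
    then have "Af c d (Bf e f s) = 1 - (X/D1)/(c + d * (X/D1))" unfolding Af_def by simp
    also have "c + d * (X/D1) = (c * D1 + d * X)/D1" using D1p by (simp add: field_simps)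
    also have "1 - (X/D1)/((c * D1 + d * X)/D1) = 1 - X/(c * D1 + d * X)" using D1p den2p by simp
    also have "\<dots> = (c * D1 + (d-1) * X)/(c * D1 + d * X)" using den2p by (simp add: field_simps)
    finally show ?thesis .
  qed
  define C where "C = c + d"
  define E where "E = e + f"
  have ident: "(c * D1 + (d-1) * X) * (e * D2 + f * Y) - Y * (c * D1 + d * X) =
      X * Y * ((C-1) * (E-1)-1) + (C-1) * e * u * X + c * s * Y * (E-1) + c * s * e * u"
    unfolding C_def E_def D1_def D2_def X_def Y_def u_def by (simp add: algebra_simps)
  have "0 \<le> X * Y * ((C-1) * (E-1)-1)" using Xp Yp CE unfolding C_def E_def by simp
  moreover have "0 \<le> (C-1) * e * u * X" using C1 e0 u Xp unfolding C_def by simp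
  moreover have "0 \<le> c * s * Y * (E-1)" using c0 assms Yp E1 unfolding E_def by simp
  moreover have "0 \<le> c * s * e * u" using c0 assms e0 u by simp
  ultimately have "Y * (c * D1 + d * X) \<le> (c * D1 + (d-1) * X) * (e * D2 + f * Y)" using ident by linarith
  then have "Y/(e * D2 + f * Y) \<le> (c * D1 + (d-1) * X)/(c * D1 + d * X)"
    using den1p den2p by (simp add: field_simps)
  then show ?thesis using BA AB by simp
qed

lemma gm_inst: "gm (\<lambda>x. Af c d (clmp x)) (\<lambda>x. Bf e f (clmp x))"
proof
  have cA: "continuous_on {0..1} (Af c d)"
    unfolding Af_def by (intro continuous_intros) (use PA in \<open>auto simp: less_le\<close>)
  show "continuous_on UNIV (\<lambda>x. Af c d (clmp x))"
    by (rule continuous_on_compose2[OF cA cont_clamp]) (auto simp: clamp_range)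
  have cB: "continuous_on {0..1} (Bf e f)"
    unfolding Bf_def by (intro continuous_intros) (use PB in \<open>auto simp: less_le\<close>)
  show "continuous_on UNIV (\<lambda>x. Bf e f (clmp x))"
    by (rule continuous_on_compose2[OF cB cont_clamp]) (auto simp: clamp_range)
next
  fix x y :: real assume "0 \<le> x" "x < y" "y \<le> 1"
  then show "Af c d (clmp x) < Af c d (clmp y)" "Bf e f (clmp x) < Bf e f (clmp y)"
    using Af_mono Bf_mono by (simp_all add: clamp_id)
next
  fix x :: real assume "0 \<le> x" "x \<le> 1"
  then show "0 \<le> Af c d (clmp x) \<and> Af c d (clmp x) \<le> 1" "0 \<le> Bf e f (clmp x) \<and> Bf e f (clmp x) \<le> 1"
    using Af_range Bf_range by (simp_all add: clamp_id)
next
  show "Af c d (clmp 1) = 1" "0 < Af c d (clmp 0)" "Bf e f (clmp 0) = 0"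
    using Af1 Af0 Bf0 by (simp_all add: clamp_id)
next
  fix y :: real assume "0 \<le> y" "y \<le> 1"
  then show "y < Af c d (clmp y) \<or> Bf e f (clmp y) < y" using disjf by (simp add: clamp_id)
next
  fix s :: real assume s: "0 \<le> s" "s \<le> 1"
  have "clmp (Af c d s) = Af c d s" using Af_range[OF s] by (simp add: clamp_id)
  moreover have "clmp (Bf e f s) = Bf e f s" using Bf_range[OF s] by (simp add: clamp_id)
  ultimately show "Bf e f (clmp (Af c d (clmp s))) \<le> Af c d (clmp (Bf e f (clmp s)))"
    using gapf[OF s] s by (simp add: clamp_id)
qed

end


lemma nxt_simps[simp]: "nxt 1 = 2" "nxt 2 = 3" "nxt 3 = 1" by (simp_all add: nxt_def)

lemma pt1: "pt (x, 1) = (\<lambda>l. if l = 2 then 1 - x else if l = 3 then x else 0)"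
  by (rule ext) (simp add: pt_def nxt_def)
lemma pt2: "pt (y, 2) = (\<lambda>l. if l = 3 then 1 - y else if l = 1 then y else 0)"
  by (rule ext) (simp add: pt_def nxt_def)
lemma pt3: "pt (y, 3) = (\<lambda>l. if l = 1 then 1 - y else if l = 2 then y else 0)"
  by (rule ext) (simp add: pt_def nxt_def)

context
  fixes lam mu :: "nat \<Rightarrow> real"
  assumes l1: "0 < lam 1" and l2: "0 < lam 2" and l3: "0 < lam 3"
    and m1: "lam 1 < mu 1" and m2: "lam 2 < mu 2" and m3: "lam 3 < mu 3"
begin

definition "LL = lam 1 + lam 2 + lam 3"
definition "vm x = lam 1 * (1-x) / ((mu 2 - lam 2) + (LL - mu 2) * (1-x))"
definition "wm x = lam 1 * x / ((mu 3 - lam 3) + (LL - mu 3) * x)"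
definition "cc = (mu 1 - lam 1) * (mu 2 - lam 2) / (lam 1 * lam 2)"
definition "dd = ((mu 1 - lam 1) * (LL - mu 2) + lam 1 * (LL - mu 1)) / (lam 1 * lam 2)"
definition "ee = (mu 1 - lam 1) * (mu 3 - lam 3) / (lam 1 * lam 3)"
definition "ff = ((mu 1 - lam 1) * (LL - mu 3) + lam 1 * (LL - mu 1)) / (lam 1 * lam 3)"

lemma mt: "mu j > 0 \<Longrightarrow> mu j * theta lam mu j = LL - mu j"
  unfolding theta_def LL_def by (simp add: field_simps)

lemma mu_pos: "0 < mu 1" "0 < mu 2" "0 < mu 3" using l1 l2 l3 m1 m2 m3 by linarith+

lemma den_pos: fixes a bb u :: real assumes "0 < a" "0 < a + bb" "0 \<le> u" "u \<le> 1" shows "0 < a + bb * u"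
  using pos_lin[of a bb u] assms by simp

lemma D2pos: "0 \<le> u \<Longrightarrow> u \<le> 1 \<Longrightarrow> 0 < (mu 2 - lam 2) + (LL - mu 2) * u"
  by (rule den_pos) (use m2 l1 l3 in \<open>auto simp: LL_def\<close>)
lemma D3pos: "0 \<le> u \<Longrightarrow> u \<le> 1 \<Longrightarrow> 0 < (mu 3 - lam 3) + (LL - mu 3) * u"
  by (rule den_pos) (use m3 l1 l2 in \<open>auto simp: LL_def\<close>)
lemma D1pos: "0 \<le> u \<Longrightarrow> u \<le> 1 \<Longrightarrow> 0 < (mu 1 - lam 1) + (LL - mu 1) * u"
  by (rule den_pos) (use m1 l2 l3 in \<open>auto simp: LL_def\<close>)

lemma vm_range: assumes "0 \<le> x" "x \<le> 1" shows "0 \<le> vm x" "vm x \<le> 1"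
proof -
  have D: "0 < (mu 2 - lam 2) + (LL - mu 2) * (1-x)" using D2pos assms by simp
  show "0 \<le> vm x" unfolding vm_def using D l1 assms by simp
  have "lam 1 * (1-x) \<le> (mu 2 - lam 2) + (LL - mu 2) * (1-x)"
  proof -
    have "0 \<le> (mu 2 - lam 2) * x" using m2 assms by simp
    moreover have "0 \<le> lam 3 * (1-x)" using l3 assms by simp
    ultimately show ?thesis unfolding LL_def by (simp add: algebra_simps)
  qed
  then show "vm x \<le> 1" unfolding vm_def using D by simp
qed

lemma wm_range: assumes "0 \<le> x" "x \<le> 1" shows "0 \<le> wm x" "wm x \<le> 1"
proof -
  have D: "0 < (mu 3 - lam 3) + (LL - mu 3) * x" using D3pos assms by simp
  show "0 \<le> wm x" unfolding wm_def using D l1 assms by simp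
  have "lam 1 * x \<le> (mu 3 - lam 3) + (LL - mu 3) * x"
  proof -
    have "0 \<le> (mu 3 - lam 3) * (1-x)" using m3 assms by simp
    moreover have "0 \<le> lam 2 * x" using l2 assms by simp
    ultimately show ?thesis unfolding LL_def by (simp add: algebra_simps)
  qed
  then show "wm x \<le> 1" unfolding wm_def using D by simp
qed

lemma I1: assumes "0 \<le> x" "x \<le> 1" shows "fmap lam mu 2 (pt (x, 1)) = pt (vm x, 2)"
proof (rule ext)
  fix l :: nat
  have D: "0 < (mu 2 - lam 2) + (LL - mu 2) * (1-x)" using D2pos assms by simp
  have mt2: "mu 2 * theta lam mu 2 = LL - mu 2" using mt mu_pos by simp
  consider "l = 1" | "l = 2" | "l = 3" | "l \<notin> {1,2,3}" by auto
  then show "fmap lam mu 2 (pt (x, 1)) l = pt (vm x, 2) l"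
  proof cases
    case 1 then show ?thesis unfolding fmap_def pt1 pt2 vm_def using mt2 by simp
  next
    case 2 then show ?thesis unfolding fmap_def pt1 pt2 by simp
  next
    case 3
    have "((mu 2 - lam 2) * x + lam 3 * (1 - x)) / ((mu 2 - lam 2) + (LL - mu 2) * (1-x)) = 1 - vm x"
      unfolding vm_def using D by (simp add: field_simps LL_def; simp add: algebra_simps)
    then show ?thesis unfolding fmap_def pt1 pt2 using 3 mt2 by simp
  next
    case 4 then show ?thesis unfolding fmap_def pt1 pt2 by auto
  qed
qed

lemma I3: assumes "0 \<le> x" "x \<le> 1" shows "fmap lam mu 3 (pt (x, 1)) = pt (1 - wm x, 3)"
proof (rule ext)
  fix l :: nat
  have D: "0 < (mu 3 - lam 3) + (LL - mu 3) * x" using D3pos assms by simp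
  have mt3: "mu 3 * theta lam mu 3 = LL - mu 3" using mt mu_pos by simp
  consider "l = 1" | "l = 2" | "l = 3" | "l \<notin> {1,2,3}" by auto
  then show "fmap lam mu 3 (pt (x, 1)) l = pt (1 - wm x, 3) l"
  proof cases
    case 1 then show ?thesis unfolding fmap_def pt1 pt3 wm_def using mt3 by simp
  next
    case 2
    have "((mu 3 - lam 3) * (1 - x) + lam 2 * x) / ((mu 3 - lam 3) + (LL - mu 3) * x) = 1 - wm x"
      unfolding wm_def using D by (simp add: field_simps LL_def; simp add: algebra_simps)
    then show ?thesis unfolding fmap_def pt1 pt3 using 2 mt3 by simp
  next
    case 3 then show ?thesis unfolding fmap_def pt1 pt3 by simp
  next
    case 4 then show ?thesis unfolding fmap_def pt1 pt3 by auto
  qed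
qed


lemma cc_pos: "0 < cc" unfolding cc_def using l1 l2 m1 m2 by simp
lemma ee_pos: "0 < ee" unfolding ee_def using l1 l3 m1 m3 by simp
lemma CC: "cc + dd - 1 = mu 1 * lam 3 / (lam 1 * lam 2)"
  unfolding cc_def dd_def LL_def using l1 l2 by (simp add: field_simps; simp add: algebra_simps)
lemma EE: "ee + ff - 1 = mu 1 * lam 2 / (lam 1 * lam 3)"
  unfolding ee_def ff_def LL_def using l1 l3 by (simp add: field_simps; simp add: algebra_simps)
lemma CC_pos: "0 < cc + dd - 1" unfolding CC using l1 l2 l3 mu_pos by simp
lemma EE_pos: "0 < ee + ff - 1" unfolding EE using l1 l2 l3 mu_pos by simp
lemma CE1: "1 \<le> (cc + dd - 1) * (ee + ff - 1)"
proof -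
  have "(cc + dd - 1) * (ee + ff - 1) = (mu 1 / lam 1) * (mu 1 / lam 1)"
    unfolding CC EE using l1 l2 l3 by (simp add: field_simps)
  moreover have "1 \<le> mu 1 / lam 1" using l1 m1 by simp
  ultimately show ?thesis by (metis mult_mono' mult_1 zero_le_one)
qed

lemma key2: assumes "0 \<le> x" "x \<le> 1"
  shows "lam 2 * vm x / ((mu 1 - lam 1) + (LL - mu 1) * vm x) = (1-x)/(cc + dd * (1-x))"
proof -
  define u where "u = 1 - x"
  have u: "0 \<le> u" "u \<le> 1" using assms unfolding u_def by auto
  define D2 where "D2 = (mu 2 - lam 2) + (LL - mu 2) * u"
  define V where "V = vm x"
  define P where "P = (mu 1 - lam 1) + (LL - mu 1) * V"
  have D2p: "0 < D2" unfolding D2_def using D2pos u by simp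
  have Vr: "0 \<le> V" "V \<le> 1" unfolding V_def using vm_range assms by auto
  have Pp: "0 < P" unfolding P_def using D1pos Vr by simp
  have VD: "V * D2 = lam 1 * u" unfolding V_def vm_def D2_def u_def using D2p unfolding D2_def u_def by simp
  have "P * D2 = (mu 1 - lam 1) * D2 + (LL - mu 1) * (V * D2)" unfolding P_def by (simp add: algebra_simps)
  then have PD: "P * D2 = (mu 1 - lam 1) * D2 + (LL - mu 1) * lam 1 * u"
    using VD by (simp add: mult.assoc)
  have Q: "(cc + dd * u) * (lam 1 * lam 2) = (mu 1 - lam 1) * D2 + (LL - mu 1) * lam 1 * u"
    unfolding cc_def dd_def D2_def using l1 l2 by (simp add: field_simps; simp add: algebra_simps)
  have Qp: "0 < cc + dd * u"
  proof -
    have "0 < P * D2" using Pp D2p by simp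
    then have "0 < (cc + dd * u) * (lam 1 * lam 2)" using PD Q by simp
    moreover have "0 < lam 1 * lam 2" using l1 l2 by simp
    ultimately show ?thesis using zero_less_mult_pos2 by blast
  qed
  have "lam 2 * V / P = lam 2 * V * D2 / (P * D2)" using D2p by simp
  also have "\<dots> = lam 2 * (lam 1 * u) / (P * D2)" using VD by (simp add: mult.assoc)
  also have "\<dots> = u * (lam 1 * lam 2) / ((cc + dd * u) * (lam 1 * lam 2))" using PD Q by (simp add: algebra_simps)
  also have "\<dots> = u / (cc + dd * u)" using l1 l2 by simp
  finally show ?thesis unfolding V_def P_def u_def .
qed

lemma key4: assumes "0 \<le> x" "x \<le> 1"
  shows "lam 3 * wm x / ((mu 1 - lam 1) + (LL - mu 1) * wm x) = x/(ee + ff * x)"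
proof -
  define D3 where "D3 = (mu 3 - lam 3) + (LL - mu 3) * x"
  define W where "W = wm x"
  define P where "P = (mu 1 - lam 1) + (LL - mu 1) * W"
  have D3p: "0 < D3" unfolding D3_def using D3pos assms by simp
  have Wr: "0 \<le> W" "W \<le> 1" unfolding W_def using wm_range assms by auto
  have Pp: "0 < P" unfolding P_def using D1pos Wr by simp
  have WD: "W * D3 = lam 1 * x" unfolding W_def wm_def D3_def using D3p unfolding D3_def by simp
  have "P * D3 = (mu 1 - lam 1) * D3 + (LL - mu 1) * (W * D3)" unfolding P_def by (simp add: algebra_simps)
  then have PD: "P * D3 = (mu 1 - lam 1) * D3 + (LL - mu 1) * lam 1 * x"
    using WD by (simp add: mult.assoc)
  have Q: "(ee + ff * x) * (lam 1 * lam 3) = (mu 1 - lam 1) * D3 + (LL - mu 1) * lam 1 * x"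
    unfolding ee_def ff_def D3_def using l1 l3 by (simp add: field_simps; simp add: algebra_simps)
  have "lam 3 * W / P = lam 3 * W * D3 / (P * D3)" using D3p by simp
  also have "\<dots> = lam 3 * (lam 1 * x) / (P * D3)" using WD by (simp add: mult.assoc)
  also have "\<dots> = x * (lam 1 * lam 3) / ((ee + ff * x) * (lam 1 * lam 3))" using PD Q by (simp add: algebra_simps)
  also have "\<dots> = x / (ee + ff * x)" using l1 l3 by simp
  finally show ?thesis unfolding W_def P_def .
qed

lemma compl: "0 < (mu 1 - lam 1) + (LL - mu 1) * V \<Longrightarrow>
   ((mu 1 - lam 1) * (1 - V) + lam 3 * V) / ((mu 1 - lam 1) + (LL - mu 1) * V) =
   1 - lam 2 * V / ((mu 1 - lam 1) + (LL - mu 1) * V)"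
  unfolding LL_def by (simp add: field_simps; simp add: algebra_simps)

lemma compl': "0 < (mu 1 - lam 1) + (LL - mu 1) * V \<Longrightarrow>
   ((mu 1 - lam 1) * (1 - V) + lam 2 * V) / ((mu 1 - lam 1) + (LL - mu 1) * V) =
   1 - lam 3 * V / ((mu 1 - lam 1) + (LL - mu 1) * V)"
  unfolding LL_def by (simp add: field_simps; simp add: algebra_simps)

lemma I2: assumes "0 \<le> x" "x \<le> 1" shows "fmap lam mu 1 (pt (vm x, 2)) = pt (Af cc dd x, 1)"
proof (rule ext)
  fix l :: nat
  have Vr: "0 \<le> vm x" "vm x \<le> 1" using vm_range assms by auto
  have P: "0 < (mu 1 - lam 1) + (LL - mu 1) * vm x" using D1pos Vr by simp
  have mt1: "mu 1 * theta lam mu 1 = LL - mu 1" using mt mu_pos by simp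
  have k: "1 - Af cc dd x = lam 2 * vm x / ((mu 1 - lam 1) + (LL - mu 1) * vm x)"
    using key2[OF assms] unfolding Af_def by simp
  consider "l = 1" | "l = 2" | "l = 3" | "l \<notin> {1,2,3}" by auto
  then show "fmap lam mu 1 (pt (vm x, 2)) l = pt (Af cc dd x, 1) l"
  proof cases
    case 1 then show ?thesis unfolding fmap_def pt1 pt2 by simp
  next
    case 2
    then show ?thesis unfolding fmap_def pt1 pt2 using mt1 k by simp
  next
    case 3
    have "Af cc dd x = 1 - (1 - Af cc dd x)" by simp
    also have "\<dots> = ((mu 1 - lam 1) * (1 - vm x) + lam 3 * vm x) / ((mu 1 - lam 1) + (LL - mu 1) * vm x)"
      unfolding k using compl[OF P] by simp
    finally show ?thesis unfolding fmap_def pt1 pt2 using 3 mt1 by simp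
  next
    case 4 then show ?thesis unfolding fmap_def pt1 pt2 by auto
  qed
qed

lemma I4: assumes "0 \<le> x" "x \<le> 1" shows "fmap lam mu 1 (pt (1 - wm x, 3)) = pt (Bf ee ff x, 1)"
proof (rule ext)
  fix l :: nat
  have Wr: "0 \<le> wm x" "wm x \<le> 1" using wm_range assms by auto
  have P: "0 < (mu 1 - lam 1) + (LL - mu 1) * wm x" using D1pos Wr by simp
  have mt1: "mu 1 * theta lam mu 1 = LL - mu 1" using mt mu_pos by simp
  have k: "Bf ee ff x = lam 3 * wm x / ((mu 1 - lam 1) + (LL - mu 1) * wm x)"
    using key4[OF assms] unfolding Bf_def by simp
  consider "l = 1" | "l = 2" | "l = 3" | "l \<notin> {1,2,3}" by auto
  then show "fmap lam mu 1 (pt (1 - wm x, 3)) l = pt (Bf ee ff x, 1) l"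
  proof cases
    case 1 then show ?thesis unfolding fmap_def pt1 pt3 by simp
  next
    case 2
    have "1 - Bf ee ff x = ((mu 1 - lam 1) * (1 - wm x) + lam 2 * wm x) / ((mu 1 - lam 1) + (LL - mu 1) * wm x)"
      unfolding k using compl'[OF P] by simp
    then show ?thesis unfolding fmap_def pt1 pt3 using 2 mt1 by simp
  next
    case 3
    then show ?thesis unfolding fmap_def pt1 pt3 using mt1 k by simp
  next
    case 4 then show ?thesis unfolding fmap_def pt1 pt3 by auto
  qed
qed


lemma vm_mono: assumes "0 \<le> x" "x \<le> y" "y \<le> 1" shows "vm y \<le> vm x"
proof -
  define u where "u = 1 - x"
  define u' where "u' = 1 - y"
  have uu: "0 \<le> u'" "u' \<le> u" "u \<le> 1" using assms unfolding u_def u'_def by auto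
  define a where "a = mu 2 - lam 2"
  define bb where "bb = LL - mu 2"
  have a0: "0 < a" unfolding a_def using m2 by simp
  have P: "0 < a + bb * u" unfolding a_def bb_def using D2pos uu by simp
  have P': "0 < a + bb * u'" unfolding a_def bb_def using D2pos uu by simp
  have "u' * (a + bb * u) \<le> u * (a + bb * u')" using uu a0 by (simp add: algebra_simps)
  then have "u' / (a + bb * u') \<le> u / (a + bb * u)" using P P' by (simp add: field_simps)
  then have "lam 1 * (u' / (a + bb * u')) \<le> lam 1 * (u / (a + bb * u))" by (rule mult_left_mono) (use l1 in simp)
  then show ?thesis unfolding vm_def a_def[symmetric] bb_def[symmetric] u_def[symmetric] u'_def[symmetric] by simp
qed

lemma wm_mono: assumes "0 \<le> x" "x \<le> y" "y \<le> 1" shows "wm x \<le> wm y"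
proof -
  define a where "a = mu 3 - lam 3"
  define bb where "bb = LL - mu 3"
  have a0: "0 < a" unfolding a_def using m3 by simp
  have P: "0 < a + bb * x" unfolding a_def bb_def using D3pos assms by simp
  have P': "0 < a + bb * y" unfolding a_def bb_def using D3pos assms by simp
  have "x * (a + bb * y) \<le> y * (a + bb * x)" using assms a0 by (simp add: algebra_simps)
  then have "x / (a + bb * x) \<le> y / (a + bb * y)" using P P' by (simp add: field_simps)
  then have "lam 1 * (x / (a + bb * x)) \<le> lam 1 * (y / (a + bb * y))" by (rule mult_left_mono) (use l1 in simp)
  then show ?thesis unfolding wm_def a_def[symmetric] bb_def[symmetric] by simp
qed

lemma vm_pos: assumes "0 \<le> x" "x < 1" shows "0 < vm x"
proof -
  have "0 < (mu 2 - lam 2) + (LL - mu 2) * (1-x)" using D2pos assms by simp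
  then show ?thesis unfolding vm_def using l1 assms by simp
qed

lemma wm_pos: assumes "0 < x" "x \<le> 1" shows "0 < wm x"
proof -
  have "0 < (mu 3 - lam 3) + (LL - mu 3) * x" using D3pos assms by simp
  then show ?thesis unfolding wm_def using l1 assms by simp
qed

end

theorem theorem3p3:
  fixes lam mu :: "nat \<Rightarrow> real"
  assumes "\<forall>i\<in>{1,2,3}. lam i > 0 \<and> mu i > 0 \<and> lam i / mu i < 1"
    and "lam 1 / mu 1 + lam 2 / mu 2 + lam 3 / mu 3 > 1"
  shows "\<exists>S :: (real \<times> real \<times> real) set.
           uncountable S \<and> S \<subseteq> {0<..<1} \<times> {0<..<1} \<times> {0<..<1} \<and>
           (\<forall>d\<in>S. \<exists>z. trajectory lam mu (dfun d) z \<and> nonperiodic z)"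
proof -
  have pi: "0 < lam i" "0 < mu i" "lam i < mu i" if "i \<in> {1,2,3}" for i
  proof -
    have h: "lam i > 0" "mu i > 0" "lam i / mu i < 1" using assms(1) that by auto
    show "0 < lam i" "0 < mu i" using h by auto
    show "lam i < mu i" using h by (simp add: divide_less_eq)
  qed
  have l1: "0 < lam 1" and l2: "0 < lam 2" and l3: "0 < lam 3"
    and m1: "lam 1 < mu 1" and m2: "lam 2 < mu 2" and m3: "lam 3 < mu 3" using pi by auto
  note ctx = l1 l2 l3 m1 m2 m3
  define c where "c = cc lam mu"
  define d where "d = dd lam mu"
  define e where "e = ee lam mu"
  define f where "f = ff lam mu"
  have gmi: "gm (\<lambda>x. Af c d (clmp x)) (\<lambda>x. Bf e f (clmp x))"
    unfolding c_def d_def e_def f_def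
    by (rule gm_inst[OF cc_pos[OF ctx] ee_pos[OF ctx] CC_pos[OF ctx] EE_pos[OF ctx] CE1[OF ctx]])
  obtain s x w where s: "0 < s" "s < 1" and x0: "x 0 = s" and x01: "\<And>t. 0 \<le> x t \<and> x t \<le> 1"
    and xs0: "\<And>t. x (Suc t) = (if w t then Bf e f (clmp (x t)) else Af c d (clmp (x t)))"
    and wB: "\<And>t. w t \<Longrightarrow> s \<le> x t" and wA: "\<And>t. \<not> w t \<Longrightarrow> x t \<le> s"
    and np: "\<And>N q. 1 \<le> q \<Longrightarrow> \<not> (\<forall>n\<ge>N. w (n+q) = w n)"
    using gm.main_gm[OF gmi] by blast
  have xs: "x (Suc t) = (if w t then Bf e f (x t) else Af c d (x t))" for t
    using xs0[of t] x01[of t] by (simp add: clamp_id)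
  define V where "V = vm lam mu s"
  define W where "W = wm lam mu s"
  have V: "0 < V" "V \<le> 1" unfolding V_def using vm_pos[OF ctx] vm_range[OF ctx] s by auto
  have W: "0 < W" "W \<le> 1" unfolding W_def using wm_pos[OF ctx] wm_range[OF ctx] s by auto
  define d3 where "d3 = 1 - W/2"
  have d3: "0 < d3" "d3 < 1" unfolding d3_def using W by auto
  define S where "S = (\<lambda>d2. (s, d2, d3)) ` {0<..<V}"
  have unc: "uncountable S"
  proof
    assume "countable S"
    moreover have "inj_on (\<lambda>d2. (s, d2, d3)) {0<..<V}" by (auto simp: inj_on_def)
    ultimately have "countable {0<..<V}" unfolding S_def using countable_image_inj_on by blast
    then show False using uncountable_open_interval[of 0 V] V by simp
  qed
  have sub: "S \<subseteq> {0<..<1} \<times> {0<..<1} \<times> {0<..<1}"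
    unfolding S_def using s V d3 by auto
  have traj: "\<exists>z. trajectory lam mu (dfun dd3) z \<and> nonperiodic z" if dS: "dd3 \<in> S" for dd3
  proof -
    obtain d2 where d2: "0 < d2" "d2 < V" and ddef: "dd3 = (s, d2, d3)" using dS unfolding S_def by auto
    have df: "dfun dd3 1 = s" "dfun dd3 2 = d2" "dfun dd3 3 = d3" unfolding ddef dfun_def by auto
    define z where "z t = (if even t then (x (t div 2), 1::nat)
       else if w (t div 2) then (1 - wm lam mu (x (t div 2)), 3) else (vm lam mu (x (t div 2)), 2))" for t
    have zE: "z (2*k) = (x k, 1)" for k unfolding z_def by simp
    have zO: "z (2*k+1) = (if w k then (1 - wm lam mu (x k), 3) else (vm lam mu (x k), 2))" for k
      unfolding z_def by simp
    define P where "P t \<longleftrightarrow> snd (z t) \<in> {1,2,3} \<and> fst (z t) \<in> {0..1} \<and>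
        (\<exists>j. rule (dfun dd3) (z t) j \<and> side (z (Suc t)) = j \<and> pt (z (Suc t)) = fmap lam mu j (pt (z t)))" for t
    have PE: "P (2*k)" for k
    proof -
      have xk: "0 \<le> x k" "x k \<le> 1" using x01 by auto
      have zS: "z (Suc (2*k)) = (if w k then (1 - wm lam mu (x k), 3) else (vm lam mu (x k), 2))"
        using zO[of k] by simp
      show ?thesis
      proof (cases "w k")
        case True
        have r: "rule (dfun dd3) (z (2*k)) 3" unfolding rule_def zE using wB[OF True] df
          by (auto simp: nxt_def)
        show ?thesis unfolding P_def
          using r xk True zS I3[OF ctx xk] unfolding zE side_def by auto
      next
        case False
        have r: "rule (dfun dd3) (z (2*k)) 2" unfolding rule_def zE using wA[OF False] df
          by (auto simp: nxt_def)
        show ?thesis unfolding P_def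
          using r xk False zS I1[OF ctx xk] unfolding zE side_def by auto
      qed
    qed
    have PO: "P (2*k+1)" for k
    proof -
      have xk: "0 \<le> x k" "x k \<le> 1" using x01 by auto
      have zS: "z (Suc (2*k+1)) = (x (Suc k), 1)" using zE[of "Suc k"] by simp
      show ?thesis
      proof (cases "w k")
        case True
        have wmk: "W \<le> wm lam mu (x k)" unfolding W_def using wm_mono[OF ctx] wB[OF True] s xk by simp
        have wr: "0 \<le> wm lam mu (x k)" "wm lam mu (x k) \<le> 1" using wm_range[OF ctx xk] by auto
        have lt: "1 - wm lam mu (x k) < d3" unfolding d3_def using wmk W by simp
        have r: "rule (dfun dd3) (z (2*k+1)) 1" unfolding rule_def zO using True df lt
          by (auto simp: nxt_def)
        show ?thesis unfolding P_def
          using r wr True zS I4[OF ctx xk] xs[of k] unfolding zO side_def c_def d_def e_def f_def by auto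
      next
        case False
        have vmk: "V \<le> vm lam mu (x k)" unfolding V_def using vm_mono[OF ctx] wA[OF False] s xk by simp
        have vr: "0 \<le> vm lam mu (x k)" "vm lam mu (x k) \<le> 1" using vm_range[OF ctx xk] by auto
        have gt: "d2 < vm lam mu (x k)" using vmk d2 by simp
        have r: "rule (dfun dd3) (z (2*k+1)) 1" unfolding rule_def zO using False df gt
          by (auto simp: nxt_def)
        show ?thesis unfolding P_def
          using r vr False zS I2[OF ctx xk] xs[of k] unfolding zO side_def c_def d_def e_def f_def by auto
      qed
    qed
    have allP: "P t" for t
    proof (cases "even t")
      case True
      then obtain k where "t = 2*k" by (auto elim: evenE)
      then show ?thesis using PE by simp
    next
      case False
      then obtain k where "t = 2*k+1" by (auto elim: oddE)
      then show ?thesis using PO by simp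
    qed
    have tr: "trajectory lam mu (dfun dd3) z" unfolding trajectory_def using allP unfolding P_def by blast
    have sideZ: "side (z t) = (if even t then 1 else if w (t div 2) then 3 else 2)" for t
      unfolding z_def side_def by simp
    have nper: "nonperiodic z"
      unfolding nonperiodic_def
    proof (intro allI impI notI)
      fix m :: nat assume m1: "1 \<le> m" and ep: "eventually_periodic z m"
      then obtain N where N: "\<forall>n\<ge>N. side (z (n + m)) = side (z n)" unfolding eventually_periodic_def by blast
      show False
      proof (cases "even m")
        case False
        have "side (z (2*N + m)) = side (z (2*N))" using N by simp
        then show False using False unfolding sideZ by (auto split: if_splits)
      next
        case True
        then obtain q where q: "m = 2*q" by (auto elim: evenE)
        then have q1: "1 \<le> q" using m1 by simp
        have "\<forall>n\<ge>N. w (n+q) = w n"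
        proof (intro allI impI)
          fix n assume Nn: "N \<le> n"
          have "N \<le> 2*n+1" using Nn by linarith
          then have "side (z (2*n+1 + m)) = side (z (2*n+1))" using N by blast
          moreover have "2*n+1+m = 2*(n+q)+1" using q by simp
          ultimately have "side (z (2*(n+q)+1)) = side (z (2*n+1))" by simp
          then show "w (n+q) = w n" unfolding sideZ by (auto split: if_splits)
        qed
        then show False using np[OF q1] by blast
      qed
    qed
    show ?thesis using tr nper by blast
  qed
  show ?thesis using unc sub traj by blast
qed


end
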